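(* Assume $n>3t+2d$. In any execution of Algorithm 1, if a correct process mbrb-delivers an app-message $m$ from $p_j$ with sequence number $sn$, then at least $\ell=c-d$ correct processes mbrb-deliver $m$ from $p_j$ with sequence number $sn$.
   Context: System model. There are $n$ asynchronous processes $p_1,\dots,p_n$ with distinct known identities. Up to $t$ are Byzantine (arbitrary behavior); the rest are correct; $c$ is the number of correct processes in the execution, $n-t\le c\le n$. The network is fully connected, asynchronous, never corrupts/duplicates/creates messages; "broadcast $M$" sends $M$ to all $n$ processes; a message adversary may suppress, per broadcast by a correct process, up to $d$ ($0\le d<c$) copies addressed to correct processes, all other copies among correct processes being eventually received. Signatures are unforgeable and public keys are known. Algorithm 1 (code for $p_i$). Each process stores, for each triplet $(m,sn,j)$, a set of saved valid signatures of that triplet, at most one per signer. On $\mathrm{mbrb\_broadcast}(m,sn)$: $p_i$ saves its own signature of $(m,sn,i)$ and broadcasts $\mathrm{BUNDLE}(m,sn,i,S)$, $S$ the saved signatures for $(m,sn,i)$. On receiving $\mathrm{BUNDLE}(m,sn,j,sigs)$: if $p_i$ has not already mbrb-delivered some $(-,sn,j)$ and $sigs$ contains a valid signature of $(m,sn,j)$ by $p_j$, then: (1) save all new valid signatures of $(m,sn,j)$ in $sigs$; (2) if $p_i$ has not yet signed any $(-,sn,j)$, save its own signature of $(m,sn,j)$ and broadcast $\mathrm{BUNDLE}(m,sn,j,\text{all saved signatures for }(m,sn,j))$; (3) if strictly more than $\frac{n+t}{2}$ signatures for $(m,sn,j)$ are saved, broadcast $\mathrm{BUNDLE}(m,sn,j,\text{all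 saved signatures})$ and mbrb-deliver $(m,sn,j)$. *)

theory Defs
  imports Main
begin

(* Since signatures are unforgeable
   and public keys are known, a valid signature of a triplet x by process k is
   represented abstractly by the pair (k, x); a bundle carries a set of such pairs
   (pairs whose signer is not a process, or whose triplet is not the bundle's
   triplet, are simply not valid signatures of the bundle's triplet). *)

type_synonym 'm triplet = "'m \<times> nat \<times> nat"
type_synonym 'm sig = "nat \<times> 'm triplet"

datatype 'm msg = BUNDLE 'm nat nat "'m sig set"

(* a copy in transit: (broadcast id, destination, message);
   broadcast id = (global step index, tag) is unique *)
type_synonym 'm copy = "(nat \<times> nat) \<times> nat \<times> 'm msg"

record 'm gstate =
  signed  :: "nat \<Rightarrow> 'm triplet set"
  saved   :: "nat \<Rightarrow> 'm triplet \<Rightarrow> nat set"  (* signers of saved valid signatures *)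
  dlv     :: "nat \<Rightarrow> 'm triplet set"
  transit :: "'m copy set"                       (* copies sent by correct processes,
                                                    addressed to correct processes,
                                                    not suppressed, not yet received *)

definition init_state :: "'m gstate" where
  "init_state = \<lparr> signed = (\<lambda>_. {}), saved = (\<lambda>_ _. {}), dlv = (\<lambda>_. {}), transit = {} \<rparr>"

definition valid_sigs :: "nat \<Rightarrow> 'm triplet \<Rightarrow> 'm sig set \<Rightarrow> nat set" where
  "valid_sigs n x S = {k \<in> {1..n}. (k, x) \<in> S}"

(* broadcast of M by a correct process at step k with tag g; the message adversary
   suppresses the copies addressed to the correct processes in D *)
definition bcast :: "nat set \<Rightarrow> nat \<Rightarrow> nat \<Rightarrow> nat set \<Rightarrow> 'm msg \<Rightarrow> 'm copy set \<Rightarrow> 'm copy set" where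
  "bcast Cor k g D M T = T \<union> {((k, g), q, M) | q. q \<in> Cor - D}"

(* reaction of correct process i to receiving a BUNDLE message at step k;
   D1 / D2 are the sets of suppressed copies for the (up to two) broadcasts *)
definition on_receive ::
  "nat \<Rightarrow> nat \<Rightarrow> nat set \<Rightarrow> nat \<Rightarrow> nat \<Rightarrow> 'm msg \<Rightarrow> nat set \<Rightarrow> nat set
     \<Rightarrow> 'm gstate \<Rightarrow> 'm gstate" where
  "on_receive n t Cor k i M D1 D2 \<sigma> =
     (case M of BUNDLE m sn j sigs \<Rightarrow>
       (let x = (m, sn, j) in
        if (\<forall>m'. (m', sn, j) \<notin> dlv \<sigma> i) \<and> j \<in> {1..n} \<and> (j, x) \<in> sigs then
          (let S1 = saved \<sigma> i x \<union> valid_sigs n x sigs;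
               fresh = (\<forall>m'. (m', sn, j) \<notin> signed \<sigma> i);
               S2 = (if fresh then insert i S1 else S1);
               B = BUNDLE m sn j {(k', x) | k'. k' \<in> S2};
               T1 = (if fresh then bcast Cor k 0 D1 B (transit \<sigma>) else transit \<sigma>);
               dl = (2 * card S2 > n + t);
               T2 = (if dl then bcast Cor k 1 D2 B T1 else T1)
           in \<sigma>\<lparr> signed := (signed \<sigma>)(i := (if fresh then insert x (signed \<sigma> i) else signed \<sigma> i)),
                 saved := (saved \<sigma>)(i := (saved \<sigma> i)(x := S2)),
                 dlv := (dlv \<sigma>)(i := (if dl then insert x (dlv \<sigma> i) else dlv \<sigma> i)),
                 transit := T2 \<rparr>)
        else \<sigma>))"

inductive step :: "nat \<Rightarrow> nat \<Rightarrow> nat \<Rightarrow> nat set \<Rightarrow> nat \<Rightarrow> 'm gstate \<Rightarrow> 'm gstate \<Rightarrow> bool"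
  for n t d Byz where
  stutter: "step n t d Byz k \<sigma> \<sigma>"
| mbrb_broadcast:
    "\<lbrakk> i \<in> {1..n} - Byz;
       \<forall>m'. (m', sn, i) \<notin> signed \<sigma> i;
       D \<subseteq> {1..n} - Byz; card D \<le> d;
       S = insert i (saved \<sigma> i (m, sn, i)) \<rbrakk> \<Longrightarrow>
     step n t d Byz k \<sigma>
       (\<sigma>\<lparr> signed := (signed \<sigma>)(i := insert (m, sn, i) (signed \<sigma> i)),
           saved := (saved \<sigma>)(i := (saved \<sigma> i)((m, sn, i) := S)),
           transit := bcast ({1..n} - Byz) k 0 D
                        (BUNDLE m sn i {(k', (m, sn, i)) | k'. k' \<in> S}) (transit \<sigma>) \<rparr>)"
| receive_correct:
    "\<lbrakk> i \<in> {1..n} - Byz; (bid, i, M) \<in> transit \<sigma>;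
       D1 \<subseteq> {1..n} - Byz; card D1 \<le> d; D2 \<subseteq> {1..n} - Byz; card D2 \<le> d \<rbrakk> \<Longrightarrow>
     step n t d Byz k \<sigma>
       (on_receive n t ({1..n} - Byz) k i M D1 D2 (\<sigma>\<lparr> transit := transit \<sigma> - {(bid, i, M)} \<rparr>))"
| receive_byz:
    "\<lbrakk> Byz \<noteq> {}; i \<in> {1..n} - Byz; M = BUNDLE m sn j sigs;
       \<forall>k' x'. (k', x') \<in> sigs \<and> k' \<in> {1..n} - Byz \<longrightarrow> x' \<in> signed \<sigma> k';
       D1 \<subseteq> {1..n} - Byz; card D1 \<le> d; D2 \<subseteq> {1..n} - Byz; card D2 \<le> d \<rbrakk> \<Longrightarrow>
     step n t d Byz k \<sigma> (on_receive n t ({1..n} - Byz) k i M D1 D2 \<sigma>)"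

(* an (infinite, possibly eventually stuttering) execution: every non-suppressed copy
   between correct processes is eventually received *)
definition execution :: "nat \<Rightarrow> nat \<Rightarrow> nat \<Rightarrow> nat set \<Rightarrow> (nat \<Rightarrow> 'm gstate) \<Rightarrow> bool" where
  "execution n t d Byz s \<longleftrightarrow>
     s 0 = init_state \<and>
     (\<forall>k. step n t d Byz k (s k) (s (Suc k))) \<and>
     (\<forall>k e. e \<in> transit (s k) \<longrightarrow> (\<exists>k'\<ge>k. e \<notin> transit (s k')))"

end

theory Submission imports Defs begin

definition INV :: "nat \<Rightarrow> nat \<Rightarrow> nat set \<Rightarrow> 'm gstate \<Rightarrow> bool" where
 "INV n t Byz \<sigma> \<longleftrightarrow>
   (\<forall>q x. x \<in> dlv \<sigma> q \<longrightarrow> 2 * card (saved \<sigma> q x) > n + t) \<and>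
   (\<forall>q x. saved \<sigma> q x \<subseteq> {1..n}) \<and>
   (\<forall>q x k. k \<in> saved \<sigma> q x \<longrightarrow> k \<in> {1..n} - Byz \<longrightarrow> x \<in> signed \<sigma> k) \<and>
   (\<forall>k m1 m2 sn j. (m1, sn, j) \<in> signed \<sigma> k \<longrightarrow> (m2, sn, j) \<in> signed \<sigma> k \<longrightarrow> m1 = m2) \<and>
   (\<forall>b q m sn j sigs k x. (b, q, BUNDLE m sn j sigs) \<in> transit \<sigma> \<longrightarrow> (k, x) \<in> sigs
        \<longrightarrow> k \<in> {1..n} - Byz \<longrightarrow> x \<in> signed \<sigma> k)"

lemma INV_init: "INV n t Byz init_state"
  by (simp add: INV_def init_state_def)


lemma INV_D1: "INV n t Byz \<sigma> \<Longrightarrow> x \<in> dlv \<sigma> q \<Longrightarrow> 2 * card (saved \<sigma> q x) > n + t"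
  unfolding INV_def by metis
lemma INV_D2: "INV n t Byz \<sigma> \<Longrightarrow> saved \<sigma> q x \<subseteq> {1..n}"
  unfolding INV_def by metis
lemma INV_D3: "INV n t Byz \<sigma> \<Longrightarrow> k \<in> saved \<sigma> q x \<Longrightarrow> k \<in> {1..n} - Byz \<Longrightarrow> x \<in> signed \<sigma> k"
  unfolding INV_def by metis
lemma INV_D4: "INV n t Byz \<sigma> \<Longrightarrow> (m1, sn, j) \<in> signed \<sigma> k \<Longrightarrow> (m2, sn, j) \<in> signed \<sigma> k \<Longrightarrow> m1 = m2"
  unfolding INV_def by metis
lemma INV_D5: "INV n t Byz \<sigma> \<Longrightarrow> (b, q, BUNDLE m sn j sigs) \<in> transit \<sigma> \<Longrightarrow> (k, x) \<in> sigs
        \<Longrightarrow> k \<in> {1..n} - Byz \<Longrightarrow> x \<in> signed \<sigma> k"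
  unfolding INV_def by metis

lemma on_receive_unfold:
  fixes \<sigma> :: "'m gstate" and Cor D1 D2 :: "nat set" and k n t i m sn j sigs
  assumes C: "(\<forall>m'. (m', sn, j) \<notin> dlv \<sigma> i) \<and> j \<in> {1..n} \<and> (j, (m,sn,j)) \<in> sigs"
  defines "x \<equiv> (m, sn, j)"
  defines "S1 \<equiv> saved \<sigma> i x \<union> valid_sigs n x sigs"
  defines "fresh \<equiv> (\<forall>m'. (m', sn, j) \<notin> signed \<sigma> i)"
  defines "S2 \<equiv> (if fresh then insert i S1 else S1)"
  defines "B \<equiv> BUNDLE m sn j {(k', x) | k'. k' \<in> S2}"
  defines "T1 \<equiv> (if fresh then bcast Cor k 0 D1 B (transit \<sigma>) else transit \<sigma>)"
  defines "dl \<equiv> (2 * card S2 > n + t)"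
  defines "T2 \<equiv> (if dl then bcast Cor k 1 D2 B T1 else T1)"
  shows "on_receive n t Cor k i (BUNDLE m sn j sigs) D1 D2 \<sigma> =
     \<sigma>\<lparr> signed := (signed \<sigma>)(i := (if fresh then insert x (signed \<sigma> i) else signed \<sigma> i)),
                 saved := (saved \<sigma>)(i := (saved \<sigma> i)(x := S2)),
                 dlv := (dlv \<sigma>)(i := (if dl then insert x (dlv \<sigma> i) else dlv \<sigma> i)),
                 transit := T2 \<rparr>"
  using C unfolding on_receive_def assms(2-) Let_def by simp

lemma on_receive_id:
  assumes "\<not> ((\<forall>m'. (m', sn, j) \<notin> dlv \<sigma> i) \<and> j \<in> {1..n} \<and> (j, (m,sn,j)) \<in> sigs)"
  shows "on_receive n t Cor k i (BUNDLE m sn j sigs) D1 D2 \<sigma> = \<sigma>"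
  using assms unfolding on_receive_def Let_def by auto

lemma bcast_mono: "T \<subseteq> bcast Cor k g D M T" by (auto simp: bcast_def)
lemma bcast_mem: "e \<in> bcast Cor k g D M T \<Longrightarrow> e \<in> T \<or> (\<exists>q. e = ((k,g),q,M))"
  by (auto simp: bcast_def)

lemma on_receive_INV:
  assumes I: "INV n t Byz \<sigma>"
    and sg: "\<forall>k' x'. (k', x') \<in> sigs \<and> k' \<in> {1..n} - Byz \<longrightarrow> x' \<in> signed \<sigma> k'"
    and iin: "i \<in> {1..n}"
  shows "INV n t Byz (on_receive n t Cor k i (BUNDLE m sn j sigs) D1 D2 \<sigma>)"
proof (cases "(\<forall>m'. (m', sn, j) \<notin> dlv \<sigma> i) \<and> j \<in> {1..n} \<and> (j, (m,sn,j)) \<in> sigs")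
  case False
  then show ?thesis using I by (simp add: on_receive_id)
next
  case True
  note I1 = INV_D1[OF I] and I2 = INV_D2[OF I] and I3 = INV_D3[OF I] and I4 = INV_D4[OF I] and I5 = INV_D5[OF I]
  define x where "x = (m, sn, j)"
  define S1 where "S1 = saved \<sigma> i x \<union> valid_sigs n x sigs"
  define fresh where "fresh = (\<forall>m'. (m', sn, j) \<notin> signed \<sigma> i)"
  define S2 where "S2 = (if fresh then insert i S1 else S1)"
  define B where "B = BUNDLE m sn j {(k', x) | k'. k' \<in> S2}"
  define T1 where "T1 = (if fresh then bcast Cor k 0 D1 B (transit \<sigma>) else transit \<sigma>)"
  define dl where "dl = (2 * card S2 > n + t)"
  define T2 where "T2 = (if dl then bcast Cor k 1 D2 B T1 else T1)"
  define sg' where "sg' = (signed \<sigma>)(i := (if fresh then insert x (signed \<sigma> i) else signed \<sigma> i))"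
  have eq: "on_receive n t Cor k i (BUNDLE m sn j sigs) D1 D2 \<sigma> =
     \<sigma>\<lparr> signed := sg',
                 saved := (saved \<sigma>)(i := (saved \<sigma> i)(x := S2)),
                 dlv := (dlv \<sigma>)(i := (if dl then insert x (dlv \<sigma> i) else dlv \<sigma> i)),
                 transit := T2 \<rparr>"
    unfolding x_def S1_def fresh_def S2_def B_def T1_def dl_def T2_def sg'_def
    by (rule on_receive_unfold[OF True])
  have sgmono: "signed \<sigma> q \<subseteq> sg' q" for q by (auto simp: sg'_def)
  have S1sub: "S1 \<subseteq> {1..n}" using I2 by (auto simp: S1_def valid_sigs_def)
  have S2sub: "S2 \<subseteq> {1..n}" using S1sub iin by (auto simp: S2_def)
  have finS2: "finite S2" using S2sub finite_subset by blast
  have S2sup: "saved \<sigma> i x \<subseteq> S2" by (auto simp: S2_def S1_def)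
  have S2sg: "k' \<in> S2 \<Longrightarrow> k' \<in> {1..n} - Byz \<Longrightarrow> x \<in> sg' k'" for k'
  proof -
    assume a: "k' \<in> S2" "k' \<in> {1..n} - Byz"
    show ?thesis
    proof (cases "k' \<in> saved \<sigma> i x")
      case True then show ?thesis using I3 a(2) sgmono by blast
    next
      case False
      then have "k' \<in> valid_sigs n x sigs \<or> (fresh \<and> k' = i)" using a(1) by (auto simp: S2_def S1_def split: if_splits)
      then show ?thesis
      proof
        assume "k' \<in> valid_sigs n x sigs"
        then have "(k', x) \<in> sigs" by (simp add: valid_sigs_def)
        then show ?thesis using sg a(2) sgmono by blast
      next
        assume "fresh \<and> k' = i" then show ?thesis by (simp add: sg'_def)
      qed
    qed
  qed
  define \<tau> where "\<tau> = \<sigma>\<lparr> signed := sg',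
                 saved := (saved \<sigma>)(i := (saved \<sigma> i)(x := S2)),
                 dlv := (dlv \<sigma>)(i := (if dl then insert x (dlv \<sigma> i) else dlv \<sigma> i)),
                 transit := T2 \<rparr>"
  have J1: "2 * card (saved \<tau> q y) > n + t" if "y \<in> dlv \<tau> q" for q y
  proof (cases "q = i \<and> y = x")
    case True
    show ?thesis
    proof (cases dl)
      case True then show ?thesis using \<open>q = i \<and> y = x\<close> by (simp add: \<tau>_def dl_def)
    next
      case False
      then have "x \<in> dlv \<sigma> i" using that \<open>q = i \<and> y = x\<close> by (simp add: \<tau>_def)
      then have "n + t < 2 * card (saved \<sigma> i x)" by (rule I1)
      moreover have "card (saved \<sigma> i x) \<le> card S2" using S2sup finS2 by (rule card_mono[rotated])
      ultimately show ?thesis using \<open>q = i \<and> y = x\<close> by (simp add: \<tau>_def)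
    qed
  next
    case False
    then have "y \<in> dlv \<sigma> q" using that by (auto simp: \<tau>_def split: if_splits)
    then have "n + t < 2 * card (saved \<sigma> q y)" by (rule I1)
    then show ?thesis using False by (auto simp: \<tau>_def)
  qed
  have J2: "saved \<tau> q y \<subseteq> {1..n}" for q y using I2 S2sub by (simp add: \<tau>_def)
  have J3: "y \<in> signed \<tau> k'" if "k' \<in> saved \<tau> q y" "k' \<in> {1..n} - Byz" for q y k'
  proof (cases "q = i \<and> y = x")
    case True then show ?thesis using S2sg that by (simp add: \<tau>_def)
  next
    case False then have "k' \<in> saved \<sigma> q y" using that by (auto simp: \<tau>_def split: if_splits)
    then have "y \<in> signed \<sigma> k'" using that(2) by (rule I3)
    then show ?thesis using sgmono by (auto simp: \<tau>_def)
  qed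
  have J4: "m1 = m2" if "(m1, sn', j') \<in> signed \<tau> k'" "(m2, sn', j') \<in> signed \<tau> k'" for m1 m2 sn' j' k'
  proof (cases "k' = i \<and> fresh")
    case True
    have fr: "\<forall>m'. (m', sn, j) \<notin> signed \<sigma> i" using True fresh_def by simp
    have s: "signed \<tau> k' = insert (m,sn,j) (signed \<sigma> i)" using True by (simp add: \<tau>_def sg'_def x_def)
    have a1: "(m1, sn', j') \<in> insert (m,sn,j) (signed \<sigma> i)" "(m2, sn', j') \<in> insert (m,sn,j) (signed \<sigma> i)"
      using that s by auto
    show ?thesis
    proof (cases "(m1, sn', j') \<in> signed \<sigma> i \<and> (m2, sn', j') \<in> signed \<sigma> i")
      case True then show ?thesis using I4 by blast
    next
      case False then show ?thesis using a1 fr by auto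
    qed
  next
    case False
    then have "(m1, sn', j') \<in> signed \<sigma> k'" "(m2, sn', j') \<in> signed \<sigma> k'"
      using that by (auto simp: \<tau>_def sg'_def split: if_splits)
    then show ?thesis using I4 by blast
  qed
  have J5: "y \<in> signed \<tau> k'" if "(b, q, BUNDLE m' sn' j' sigs') \<in> transit \<tau>" "(k', y) \<in> sigs'"
     "k' \<in> {1..n} - Byz" for b q m' sn' j' sigs' k' y
  proof -
    have "(b, q, BUNDLE m' sn' j' sigs') \<in> transit \<sigma> \<or> BUNDLE m' sn' j' sigs' = B"
      using that(1) unfolding \<tau>_def T2_def T1_def
      by (auto split: if_splits dest!: bcast_mem)
    then show ?thesis
    proof
      assume "(b, q, BUNDLE m' sn' j' sigs') \<in> transit \<sigma>"
      then have "y \<in> signed \<sigma> k'" using that(2,3) by (rule I5)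
      then show ?thesis using sgmono by (auto simp: \<tau>_def)
    next
      assume "BUNDLE m' sn' j' sigs' = B"
      then have "k' \<in> S2" "y = x" using that(2) by (auto simp: B_def)
      then show ?thesis using S2sg that(3) by (simp add: \<tau>_def)
    qed
  qed
  have "INV n t Byz \<tau>" unfolding INV_def using J1 J2 J3 J4 J5 by blast
  then show ?thesis using eq \<tau>_def by simp
qed

lemma on_receive_transit: "transit \<sigma> \<subseteq> transit (on_receive n t Cor k i M D1 D2 \<sigma>)"
proof (cases M)
  case (BUNDLE m sn j sigs)
  show ?thesis
  proof (cases "(\<forall>m'. (m', sn, j) \<notin> dlv \<sigma> i) \<and> j \<in> {1..n} \<and> (j, (m,sn,j)) \<in> sigs")
    case True
    show ?thesis unfolding BUNDLE on_receive_unfold[OF True] using bcast_mono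
      by (auto simp: bcast_def)
  qed (simp add: BUNDLE on_receive_id)
qed

lemma on_receive_dlv: "dlv \<sigma> q \<subseteq> dlv (on_receive n t Cor k i M D1 D2 \<sigma>) q"
proof (cases M)
  case (BUNDLE m sn j sigs)
  show ?thesis
  proof (cases "(\<forall>m'. (m', sn, j) \<notin> dlv \<sigma> i) \<and> j \<in> {1..n} \<and> (j, (m,sn,j)) \<in> sigs")
    case True
    show ?thesis unfolding BUNDLE on_receive_unfold[OF True] by auto
  qed (simp add: BUNDLE on_receive_id)
qed

lemma step_dlv: "step n t d Byz k \<sigma> \<sigma>' \<Longrightarrow> dlv \<sigma> q \<subseteq> dlv \<sigma>' q"
proof (induction rule: step.cases)
  case (receive_correct i bid M D1 D2)
  then show ?case using on_receive_dlv[of "\<sigma>\<lparr>transit := transit \<sigma> - {(bid, i, M)}\<rparr>" q] by simp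
next
  case (receive_byz i M m sn j sigs D1 D2)
  then show ?case using on_receive_dlv[of \<sigma> q] by simp
qed auto

lemma step_INV:
  assumes st: "step n t d Byz k \<sigma> \<sigma>'" and I: "INV n t Byz \<sigma>"
  shows "INV n t Byz \<sigma>'"
  using st
proof (cases rule: step.cases)
  case stutter then show ?thesis using I by simp
next
  case (receive_correct i bid M D1 D2)
  obtain m sn j sigs where M: "M = BUNDLE m sn j sigs" by (cases M)
  define \<sigma>0 where "\<sigma>0 = \<sigma>\<lparr>transit := transit \<sigma> - {(bid, i, M)}\<rparr>"
  have I0: "INV n t Byz \<sigma>0" using I unfolding INV_def \<sigma>0_def by auto
  have sg: "\<forall>k' x'. (k', x') \<in> sigs \<and> k' \<in> {1..n} - Byz \<longrightarrow> x' \<in> signed \<sigma>0 k'"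
    using INV_D5[OF I] receive_correct(3) unfolding M \<sigma>0_def by auto
  show ?thesis using on_receive_INV[OF I0 sg] receive_correct unfolding M \<sigma>0_def by simp
next
  case (receive_byz i m sn j sigs D1 D2)
  show ?thesis using on_receive_INV[OF I] receive_byz by simp
next
  case (mbrb_broadcast i sn D S m)
  define x where "x = (m, sn, i)"
  note I1 = INV_D1[OF I] and I2 = INV_D2[OF I] and I3 = INV_D3[OF I] and I4 = INV_D4[OF I] and I5 = INV_D5[OF I]
  define sg' where "sg' = (signed \<sigma>)(i := insert x (signed \<sigma> i))"
  define \<tau> where "\<tau> = \<sigma>\<lparr> signed := sg',
           saved := (saved \<sigma>)(i := (saved \<sigma> i)(x := S)),
           transit := bcast ({1..n} - Byz) k 0 D
                        (BUNDLE m sn i {(k', x) | k'. k' \<in> S}) (transit \<sigma>) \<rparr>"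
  have eq: "\<sigma>' = \<tau>" using mbrb_broadcast unfolding \<tau>_def sg'_def x_def by simp
  have sgmono: "signed \<sigma> q \<subseteq> sg' q" for q by (auto simp: sg'_def)
  have Ssub: "S \<subseteq> {1..n}" using I2 mbrb_broadcast by auto
  have finS: "finite S" using Ssub finite_subset by blast
  have Ssup: "saved \<sigma> i x \<subseteq> S" using mbrb_broadcast by (auto simp: x_def)
  have Ssg: "k' \<in> S \<Longrightarrow> k' \<in> {1..n} - Byz \<Longrightarrow> x \<in> sg' k'" for k'
  proof -
    assume a: "k' \<in> S" "k' \<in> {1..n} - Byz"
    show ?thesis
    proof (cases "k' = i")
      case True then show ?thesis by (simp add: sg'_def)
    next
      case False
      then have "k' \<in> saved \<sigma> i x" using a mbrb_broadcast by (auto simp: x_def)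
      then have "x \<in> signed \<sigma> k'" using a(2) by (rule I3)
      then show ?thesis using sgmono by blast
    qed
  qed
  have J1: "2 * card (saved \<tau> q y) > n + t" if "y \<in> dlv \<tau> q" for q y
  proof -
    have "y \<in> dlv \<sigma> q" using that by (simp add: \<tau>_def)
    then have "n + t < 2 * card (saved \<sigma> q y)" by (rule I1)
    moreover have "card (saved \<sigma> q y) \<le> card (saved \<tau> q y)"
    proof (cases "q = i \<and> y = x")
      case True then show ?thesis using card_mono[OF finS Ssup] by (simp add: \<tau>_def)
    next
      case False then show ?thesis by (auto simp: \<tau>_def)
    qed
    ultimately show ?thesis by simp
  qed
  have J2: "saved \<tau> q y \<subseteq> {1..n}" for q y using I2 Ssub by (simp add: \<tau>_def)
  have J3: "y \<in> signed \<tau> k'" if "k' \<in> saved \<tau> q y" "k' \<in> {1..n} - Byz" for q y k'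
  proof (cases "q = i \<and> y = x")
    case True then show ?thesis using Ssg that by (simp add: \<tau>_def)
  next
    case False then have "k' \<in> saved \<sigma> q y" using that by (auto simp: \<tau>_def split: if_splits)
    then have "y \<in> signed \<sigma> k'" using that(2) by (rule I3)
    then show ?thesis using sgmono by (auto simp: \<tau>_def)
  qed
  have J4: "m1 = m2" if "(m1, sn', j') \<in> signed \<tau> k'" "(m2, sn', j') \<in> signed \<tau> k'" for m1 m2 sn' j' k'
  proof (cases "k' = i")
    case True
    have fr: "\<forall>m'. (m', sn, i) \<notin> signed \<sigma> i" using mbrb_broadcast by simp
    have s: "signed \<tau> k' = insert (m,sn,i) (signed \<sigma> i)" using True by (simp add: \<tau>_def sg'_def x_def)
    have a1: "(m1, sn', j') \<in> insert (m,sn,i) (signed \<sigma> i)" "(m2, sn', j') \<in> insert (m,sn,i) (signed \<sigma> i)"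
      using that s by auto
    show ?thesis
    proof (cases "(m1, sn', j') \<in> signed \<sigma> i \<and> (m2, sn', j') \<in> signed \<sigma> i")
      case True then show ?thesis using I4 by blast
    next
      case False then show ?thesis using a1 fr by auto
    qed
  next
    case False
    then have "(m1, sn', j') \<in> signed \<sigma> k'" "(m2, sn', j') \<in> signed \<sigma> k'"
      using that by (auto simp: \<tau>_def sg'_def split: if_splits)
    then show ?thesis using I4 by blast
  qed
  have J5: "y \<in> signed \<tau> k'" if "(b, q, BUNDLE m' sn' j' sigs') \<in> transit \<tau>" "(k', y) \<in> sigs'"
     "k' \<in> {1..n} - Byz" for b q m' sn' j' sigs' k' y
  proof -
    have "(b, q, BUNDLE m' sn' j' sigs') \<in> transit \<sigma> \<or> BUNDLE m' sn' j' sigs' = BUNDLE m sn i {(k', x) | k'. k' \<in> S}"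
      using that(1) unfolding \<tau>_def
      by (auto dest!: bcast_mem)
    then show ?thesis
    proof
      assume "(b, q, BUNDLE m' sn' j' sigs') \<in> transit \<sigma>"
      then have "y \<in> signed \<sigma> k'" using that(2,3) by (rule I5)
      then show ?thesis using sgmono by (auto simp: \<tau>_def)
    next
      assume "BUNDLE m' sn' j' sigs' = BUNDLE m sn i {(k', x) | k'. k' \<in> S}"
      then have "k' \<in> S" "y = x" using that(2) by auto
      then show ?thesis using Ssg that(3) by (simp add: \<tau>_def)
    qed
  qed
  have "INV n t Byz \<tau>" unfolding INV_def using J1 J2 J3 J4 J5 by blast
  then show ?thesis using eq by simp
qed

lemma on_receive_deliver:
  assumes I: "INV n t Byz \<sigma>" and iin: "i \<in> {1..n}"
    and nd: "(m, sn, j) \<notin> dlv \<sigma> q"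
    and dd: "(m, sn, j) \<in> dlv (on_receive n t Cor k i M D1 D2 \<sigma>) q"
  shows "\<exists>S. j \<in> S \<and> S \<subseteq> {1..n} \<and> 2 * card S > n + t \<and>
     (\<forall>q' \<in> Cor - D2. ((k, 1), q', BUNDLE m sn j {(k', (m, sn, j)) | k'. k' \<in> S})
         \<in> transit (on_receive n t Cor k i M D1 D2 \<sigma>))"
proof (cases M)
  case (BUNDLE m0 sn0 j0 sigs)
  show ?thesis
  proof (cases "(\<forall>m'. (m', sn0, j0) \<notin> dlv \<sigma> i) \<and> j0 \<in> {1..n} \<and> (j0, (m0,sn0,j0)) \<in> sigs")
    case False
    then show ?thesis using nd dd by (simp add: BUNDLE on_receive_id)
  next
    case True
    define x where "x = (m0, sn0, j0)"
    define S1 where "S1 = saved \<sigma> i x \<union> valid_sigs n x sigs"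
    define fresh where "fresh = (\<forall>m'. (m', sn0, j0) \<notin> signed \<sigma> i)"
    define S2 where "S2 = (if fresh then insert i S1 else S1)"
    define B where "B = BUNDLE m0 sn0 j0 {(k', x) | k'. k' \<in> S2}"
    define T1 where "T1 = (if fresh then bcast Cor k 0 D1 B (transit \<sigma>) else transit \<sigma>)"
    define dl where "dl = (2 * card S2 > n + t)"
    define T2 where "T2 = (if dl then bcast Cor k 1 D2 B T1 else T1)"
    define sg' where "sg' = (signed \<sigma>)(i := (if fresh then insert x (signed \<sigma> i) else signed \<sigma> i))"
    have eq: "on_receive n t Cor k i M D1 D2 \<sigma> =
       \<sigma>\<lparr> signed := sg',
                   saved := (saved \<sigma>)(i := (saved \<sigma> i)(x := S2)),
                   dlv := (dlv \<sigma>)(i := (if dl then insert x (dlv \<sigma> i) else dlv \<sigma> i)),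
                   transit := T2 \<rparr>"
      unfolding BUNDLE x_def S1_def fresh_def S2_def B_def T1_def dl_def T2_def sg'_def
      by (rule on_receive_unfold[OF True])
    have dd': "(m, sn, j) \<in> ((dlv \<sigma>)(i := (if dl then insert x (dlv \<sigma> i) else dlv \<sigma> i))) q"
      using dd unfolding eq by simp
    have c1: "q = i"
    proof (rule ccontr)
      assume "q \<noteq> i" then show False using dd' nd by simp
    qed
    have c2: "dl"
    proof (rule ccontr)
      assume "\<not> dl" then show False using dd' nd c1 by simp
    qed
    have c3: "(m, sn, j) = x" using dd' nd c1 c2 by simp
    have mm: "m0 = m" "sn0 = sn" "j0 = j" using c3 x_def by auto
    have S1sub: "S1 \<subseteq> {1..n}" using INV_D2[OF I, of i x] by (auto simp: S1_def valid_sigs_def)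
    have S2sub: "S2 \<subseteq> {1..n}" using S1sub iin by (auto simp: S2_def)
    have "j \<in> valid_sigs n x sigs" using True mm unfolding valid_sigs_def x_def by simp
    then have jS: "j \<in> S2" unfolding S2_def S1_def by simp
    show ?thesis
    proof (rule exI[of _ S2], intro conjI ballI)
      show "j \<in> S2" "S2 \<subseteq> {1..n}" by (fact jS) (fact S2sub)
      show "n + t < 2 * card S2" using c2 dl_def by simp
      fix q' assume q': "q' \<in> Cor - D2"
      have "((k, 1), q', B) \<in> T2" using c2 q' unfolding T2_def bcast_def by simp
      then show "((k, 1), q', BUNDLE m sn j {(k', (m, sn, j)) | k'. k' \<in> S2})
         \<in> transit (on_receive n t Cor k i M D1 D2 \<sigma>)"
        unfolding eq B_def x_def mm by simp
    qed
  qed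
qed

lemma step_deliver:
  assumes st: "step n t d Byz k \<sigma> \<sigma>'" and I: "INV n t Byz \<sigma>"
    and nd: "(m, sn, j) \<notin> dlv \<sigma> q"
    and dd: "(m, sn, j) \<in> dlv \<sigma>' q"
  shows "\<exists>D S. D \<subseteq> {1..n} - Byz \<and> card D \<le> d \<and> j \<in> S \<and> S \<subseteq> {1..n} \<and> 2 * card S > n + t \<and>
     (\<forall>q' \<in> {1..n} - Byz - D. ((k, 1), q', BUNDLE m sn j {(k', (m, sn, j)) | k'. k' \<in> S}) \<in> transit \<sigma>')"
  using st
proof (cases rule: step.cases)
  case stutter then show ?thesis using nd dd by simp
next
  case (mbrb_broadcast i' sn' D S m')
  then show ?thesis using nd dd by simp
next
  case (receive_correct i bid M D1 D2)
  define \<sigma>0 where "\<sigma>0 = \<sigma>\<lparr>transit := transit \<sigma> - {(bid, i, M)}\<rparr>"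
  have I0: "INV n t Byz \<sigma>0" using I unfolding INV_def \<sigma>0_def by auto
  have nd0: "(m, sn, j) \<notin> dlv \<sigma>0 q" using nd by (simp add: \<sigma>0_def)
  have iin: "i \<in> {1..n}" using receive_correct(2) by simp
  have dd0: "(m, sn, j) \<in> dlv (on_receive n t ({1..n} - Byz) k i M D1 D2 \<sigma>0) q"
    using dd receive_correct(1) unfolding \<sigma>0_def by simp
  obtain S where S: "j \<in> S" "S \<subseteq> {1..n}" "2 * card S > n + t"
     "\<forall>q' \<in> {1..n} - Byz - D2. ((k, 1), q', BUNDLE m sn j {(k', (m, sn, j)) | k'. k' \<in> S})
         \<in> transit (on_receive n t ({1..n} - Byz) k i M D1 D2 \<sigma>0)"
    using on_receive_deliver[OF I0 iin nd0 dd0] by blast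
  have tr: "transit \<sigma>' = transit (on_receive n t ({1..n} - Byz) k i M D1 D2 \<sigma>0)"
    using receive_correct(1) unfolding \<sigma>0_def by simp
  show ?thesis
    apply (rule exI[of _ D2], rule exI[of _ S])
    using S receive_correct(6,7) tr by simp
next
  case (receive_byz i M0 m0 sn0 j0 sigs0 D1 D2)
  have iin: "i \<in> {1..n}" using receive_byz(3) by simp
  have dd0: "(m, sn, j) \<in> dlv (on_receive n t ({1..n} - Byz) k i M0 D1 D2 \<sigma>) q"
    using dd receive_byz(1) by simp
  obtain S where S: "j \<in> S" "S \<subseteq> {1..n}" "2 * card S > n + t"
     "\<forall>q' \<in> {1..n} - Byz - D2. ((k, 1), q', BUNDLE m sn j {(k', (m, sn, j)) | k'. k' \<in> S})
         \<in> transit (on_receive n t ({1..n} - Byz) k i M0 D1 D2 \<sigma>)"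
    using on_receive_deliver[OF I iin nd dd0] by blast
  have tr: "transit \<sigma>' = transit (on_receive n t ({1..n} - Byz) k i M0 D1 D2 \<sigma>)"
    using receive_byz(1) by simp
  show ?thesis
    apply (rule exI[of _ D2], rule exI[of _ S])
    using S receive_byz(8,9) tr by simp
qed

lemma valid_sigs_bundle: "S \<subseteq> {1..n} \<Longrightarrow> valid_sigs n x {(k', x) | k'. k' \<in> S} = S"
  by (auto simp: valid_sigs_def)

lemma step_receive:
  assumes st: "step n t d Byz k \<sigma> \<sigma>'" and I: "INV n t Byz \<sigma>"
    and e: "(b, q, BUNDLE m sn j sigs) \<in> transit \<sigma>" "(b, q, BUNDLE m sn j sigs) \<notin> transit \<sigma>'"
    and j: "j \<in> {1..n}" "(j, (m, sn, j)) \<in> sigs"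
    and big: "2 * card (valid_sigs n (m, sn, j) sigs) > n + t"
  shows "(m, sn, j) \<in> dlv \<sigma>' q \<or> (\<exists>m'. (m', sn, j) \<in> dlv \<sigma> q)"
  using st
proof (cases rule: step.cases)
  case stutter then show ?thesis using e by simp
next
  case (mbrb_broadcast i' sn' D S m')
  then have "transit \<sigma> \<subseteq> transit \<sigma>'" using bcast_mono by simp
  then show ?thesis using e by blast
next
  case (receive_byz i M0 m0 sn0 j0 sigs0 D1 D2)
  then show ?thesis using e on_receive_transit by blast
next
  case (receive_correct i bid M D1 D2)
  define \<sigma>0 where "\<sigma>0 = \<sigma>\<lparr>transit := transit \<sigma> - {(bid, i, M)}\<rparr>"
  show ?thesis
  proof (cases "(bid, i, M) = (b, q, BUNDLE m sn j sigs)")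
    case False
    then have "(b, q, BUNDLE m sn j sigs) \<in> transit \<sigma>0" using e by (auto simp: \<sigma>0_def)
    then show ?thesis using e receive_correct on_receive_transit unfolding \<sigma>0_def by blast
  next
    case True
    then have iq: "i = q" "M = BUNDLE m sn j sigs" by auto
    show ?thesis
    proof (cases "\<exists>m'. (m', sn, j) \<in> dlv \<sigma> q")
      case True then show ?thesis by blast
    next
      case False
      then have C: "(\<forall>m'. (m', sn, j) \<notin> dlv \<sigma>0 q) \<and> j \<in> {1..n} \<and> (j, (m,sn,j)) \<in> sigs"
        using j by (simp add: \<sigma>0_def)
      define S1 where "S1 = saved \<sigma>0 q (m, sn, j) \<union> valid_sigs n (m, sn, j) sigs"
      have fin: "finite S1" using INV_D2[OF I, of q "(m, sn, j)"] finite_subset[of _ "{1..n}"]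
        unfolding S1_def \<sigma>0_def valid_sigs_def by auto
      have "card (valid_sigs n (m, sn, j) sigs) \<le> card S1" using fin by (rule card_mono) (auto simp: S1_def)
      moreover have "card S1 \<le> card (insert q S1)" using fin by (simp add: card_insert_le)
      ultimately have "2 * card S1 > n + t" "2 * card (insert q S1) > n + t" using big by linarith+
      then have "(m, sn, j) \<in> dlv (on_receive n t ({1..n} - Byz) k q (BUNDLE m sn j sigs) D1 D2 \<sigma>0) q"
        unfolding on_receive_unfold[OF C] S1_def by simp
      then show ?thesis using receive_correct iq unfolding \<sigma>0_def by simp
    qed
  qed
qed

lemma agreement:
  assumes I: "INV n t Byz \<sigma>" and B: "Byz \<subseteq> {1..n}" "card Byz \<le> t"
    and d1: "(m1, sn, j) \<in> dlv \<sigma> q1" and d2: "(m2, sn, j) \<in> dlv \<sigma> q2"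
  shows "m1 = m2"
proof -
  define A1 where "A1 = saved \<sigma> q1 (m1, sn, j)"
  define A2 where "A2 = saved \<sigma> q2 (m2, sn, j)"
  have c1: "2 * card A1 > n + t" unfolding A1_def by (rule INV_D1[OF I d1])
  have c2: "2 * card A2 > n + t" unfolding A2_def by (rule INV_D1[OF I d2])
  have s1: "A1 \<subseteq> {1..n}" unfolding A1_def by (rule INV_D2[OF I])
  have s2: "A2 \<subseteq> {1..n}" unfolding A2_def by (rule INV_D2[OF I])
  have f1: "finite A1" using s1 by (rule finite_subset) simp
  have f2: "finite A2" using s2 by (rule finite_subset) simp
  have "A1 \<union> A2 \<subseteq> {1..n}" using s1 s2 by blast
  then have "card (A1 \<union> A2) \<le> card {1..n}" by (rule card_mono[rotated]) simp
  then have "card (A1 \<union> A2) \<le> n" by simp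
  moreover have "card (A1 \<union> A2) + card (A1 \<inter> A2) = card A1 + card A2"
    using card_Un_Int[OF f1 f2] by simp
  ultimately have big: "card (A1 \<inter> A2) > t" using c1 c2 by linarith
  have "\<not> A1 \<inter> A2 \<subseteq> Byz"
  proof
    assume "A1 \<inter> A2 \<subseteq> Byz"
    moreover have "finite Byz" using B(1) finite_subset by blast
    ultimately have "card (A1 \<inter> A2) \<le> card Byz" by (rule card_mono[rotated])
    then show False using big B(2) by linarith
  qed
  then obtain k where k: "k \<in> A1" "k \<in> A2" "k \<notin> Byz" by blast
  have kin: "k \<in> {1..n} - Byz" using k s1 by auto
  have "(m1, sn, j) \<in> signed \<sigma> k" using k(1) unfolding A1_def by (rule INV_D3[OF I _ kin])
  moreover have "(m2, sn, j) \<in> signed \<sigma> k" using k(2) unfolding A2_def by (rule INV_D3[OF I _ kin])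
  ultimately show ?thesis by (rule INV_D4[OF I])
qed

lemma first_change:
  assumes "\<not> P a" "P b" "a \<le> b"
  shows "\<exists>c. a \<le> c \<and> c < b \<and> \<not> P c \<and> P (Suc c)"
  using assms
proof (induction b)
  case 0 then show ?case by simp
next
  case (Suc b)
  show ?case
  proof (cases "P b")
    case True
    then have "a \<le> b" using Suc.prems by (cases "a = Suc b") auto
    then show ?thesis using Suc.IH Suc.prems True by (metis less_SucI)
  next
    case False
    then show ?thesis using Suc.prems by (intro exI[of _ b]) (cases "a = Suc b", auto)
  qed
qed

theorem mainTheorem6:
  fixes n t d :: nat and Byz :: "nat set" and s :: "nat \<Rightarrow> 'm gstate"
    and m :: 'm and sn j i k :: nat
  assumes "Byz \<subseteq> {1..n}" and "card Byz \<le> t"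
    and "d < n - card Byz"
    and "n > 3 * t + 2 * d"
    and "execution n t d Byz s"
    and "i \<in> {1..n} - Byz" and "(m, sn, j) \<in> dlv (s k) i"
  shows "card {q \<in> {1..n} - Byz. \<exists>k'. (m, sn, j) \<in> dlv (s k') q} \<ge> (n - card Byz) - d"
proof -
  note ex = assms(5)[unfolded execution_def]
  have s0: "s 0 = init_state" and st: "\<And>k. step n t d Byz k (s k) (s (Suc k))"
    and fair: "\<And>k e. e \<in> transit (s k) \<Longrightarrow> \<exists>k'\<ge>k. e \<notin> transit (s k')"
    using ex by blast+
  have INVs: "INV n t Byz (s k)" for k
  proof (induction k)
    case 0 then show ?case using s0 INV_init by simp
  next
    case (Suc k) then show ?case using step_INV[OF st] by blast
  qed
  have mono: "k1 \<le> k2 \<Longrightarrow> dlv (s k1) q \<subseteq> dlv (s k2) q" for k1 k2 q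
  proof (induction k2)
    case 0 then show ?case by simp
  next
    case (Suc k2)
    show ?case
    proof (cases "k1 = Suc k2")
      case False
      then have "dlv (s k1) q \<subseteq> dlv (s k2) q" using Suc by simp
      then show ?thesis using step_dlv[OF st] by blast
    qed simp
  qed
  define x where "x = (m, sn, j)"
  define Cor where "Cor = {1..n} - Byz"
  have "\<not> (x \<in> dlv (s 0) i)" using s0 by (simp add: init_state_def)
  then obtain k0 where k0: "k0 < k" "x \<notin> dlv (s k0) i" "x \<in> dlv (s (Suc k0)) i"
    using first_change[of "\<lambda>k. x \<in> dlv (s k) i" 0 k] assms(7) x_def by auto
  obtain D S where DS: "D \<subseteq> Cor" "card D \<le> d" "j \<in> S" "S \<subseteq> {1..n}" "2 * card S > n + t"
     "\<forall>q' \<in> Cor - D. ((k0, 1), q', BUNDLE m sn j {(k', (m, sn, j)) | k'. k' \<in> S}) \<in> transit (s (Suc k0))"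
    using step_deliver[OF st INVs k0(2)[unfolded x_def] k0(3)[unfolded x_def]] Cor_def by blast
  define sigs where "sigs = {(k', (m, sn, j)) | k'. k' \<in> S}"
  have vs: "valid_sigs n (m, sn, j) sigs = S" unfolding sigs_def by (rule valid_sigs_bundle[OF DS(4)])
  have sub: "Cor - D \<subseteq> {q \<in> {1..n} - Byz. \<exists>k'. (m, sn, j) \<in> dlv (s k') q}"
  proof
    fix q assume q: "q \<in> Cor - D"
    define e where "e = ((k0, Suc 0), q, BUNDLE m sn j sigs)"
    have e0: "e \<in> transit (s (Suc k0))" using DS(6) q unfolding e_def sigs_def by simp
    obtain k' where k': "k' \<ge> Suc k0" "e \<notin> transit (s k')" using fair[OF e0] by blast
    obtain k2 where k2: "Suc k0 \<le> k2" "\<not> e \<notin> transit (s k2)" "e \<notin> transit (s (Suc k2))"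
      using first_change[of "\<lambda>k. e \<notin> transit (s k)" "Suc k0" k'] e0 k' by auto
    have jn: "j \<in> {1..n}" using DS(3,4) by blast
    have js: "(j, (m, sn, j)) \<in> sigs" using DS(3) unfolding sigs_def by blast
    have big: "2 * card (valid_sigs n (m, sn, j) sigs) > n + t" using vs DS(5) by simp
    have r: "(m, sn, j) \<in> dlv (s (Suc k2)) q \<or> (\<exists>m'. (m', sn, j) \<in> dlv (s k2) q)"
      using step_receive[OF st INVs _ _ jn js big] k2(2,3) unfolding e_def by simp
    have "\<exists>k'. (m, sn, j) \<in> dlv (s k') q"
    proof (cases "(m, sn, j) \<in> dlv (s (Suc k2)) q")
      case True then show ?thesis by blast
    next
      case False
      then obtain m' where m': "(m', sn, j) \<in> dlv (s k2) q" using r by blast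
      have "x \<in> dlv (s k2) i" using mono[OF k2(1)] k0(3) by blast
      then have "m = m'" using agreement[OF INVs assms(1,2) _ m'] x_def by simp
      then show ?thesis using m' by blast
    qed
    then show "q \<in> {q \<in> {1..n} - Byz. \<exists>k'. (m, sn, j) \<in> dlv (s k') q}" using q Cor_def by blast
  qed
  have finC: "finite Cor" unfolding Cor_def by simp
  have "card Cor = n - card Byz" unfolding Cor_def using assms(1) by (simp add: card_Diff_subset finite_subset)
  moreover have "card (Cor - D) = card Cor - card D" using DS(1) finC by (simp add: card_Diff_subset finite_subset)
  moreover have "card (Cor - D) \<le> card {q \<in> {1..n} - Byz. \<exists>k'. (m, sn, j) \<in> dlv (s k') q}"
    by (rule card_mono[OF _ sub]) simp
  ultimately show ?thesis using DS(2) by linarith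
qed

end
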